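(* Let $\Gamma\le\mathrm{Iso}(\mathbb{R}^{r,s})$ be a subgroup whose centralizer in $\mathrm{Iso}(\mathbb{R}^{r,s})$ has an open orbit in $\mathbb{R}^{r,s}$, and let $\Delta$ be the center of $\Gamma$. Then $U_\Delta\perp U_\Gamma$.
   Context: $\mathbb{R}^{r,s}$ denotes $\mathbb{R}^{n}$, $n=r+s$, with a nondegenerate symmetric bilinear form $\langle\cdot,\cdot\rangle$ of signature $(r,s)$; $\mathrm{Iso}(\mathbb{R}^{r,s})$ is its group of affine isometries, whose elements are written $\gamma=(I+A,v)\colon x\mapsto(I+A)x+v$. For a subset $\Lambda$ of $\Gamma$, $U_\Lambda=\sum_{(I+A,v)\in\Lambda}\operatorname{im}A$. Known facts (Wolf) for such $\Gamma$: every $(I+A,v)\in\Gamma$ satisfies $A^2=0$, $Av=0$, $\langle Ax,y\rangle=-\langle x,Ay\rangle$, $\ker A=(\operatorname{im}A)^\perp$, $\operatorname{im}A$ totally isotropic; for $\gamma_i=(I+A_i,v_i)\in\Gamma$ one has $A_1A_2A_3=0$ and $[\gamma_1,\gamma_2]=(I+2A_1A_2,2A_1v_2)$. *)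

theory Defs
  imports "HOL-Analysis.Analysis"
begin

text \<open>A scalar product of signature (r,s) on real^'n: a symmetric bilinear form
  admitting a B-orthonormal basis with r vectors of square 1 and s of square -1.
  (This makes real^'n with B a copy of R^{r,s}.)\<close>
definition sig_form :: "(real^'n::finite \<Rightarrow> real^'n \<Rightarrow> real) \<Rightarrow> nat \<Rightarrow> nat \<Rightarrow> bool" where
  "sig_form B r s \<longleftrightarrow> bilinear B \<and> (\<forall>x y. B x y = B y x) \<and>
     (\<exists>f :: 'n \<Rightarrow> real^'n. span (range f) = UNIV \<and>
        (\<forall>i j. i \<noteq> j \<longrightarrow> B (f i) (f j) = 0) \<and>
        (\<forall>i. B (f i) (f i) = 1 \<or> B (f i) (f i) = -1) \<and>
        card {i. B (f i) (f i) = 1} = r \<and> card {i. B (f i) (f i) = -1} = s)"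

text \<open>Affine maps x \<mapsto> L x + v, represented as pairs (L, v).\<close>
type_synonym ('n) aff = "(real^'n::finite^'n) \<times> (real^'n)"

definition aff_apply :: "('n::finite) aff \<Rightarrow> real^'n \<Rightarrow> real^'n" where
  "aff_apply g x = fst g *v x + snd g"

definition aff_mult :: "('n::finite) aff \<Rightarrow> 'n aff \<Rightarrow> 'n aff" where
  "aff_mult g h = (fst g ** fst h, fst g *v snd h + snd g)"

definition aff_one :: "('n::finite) aff" where
  "aff_one = (mat 1, 0)"

definition aff_inv :: "('n::finite) aff \<Rightarrow> 'n aff" where
  "aff_inv g = (matrix_inv (fst g), - (matrix_inv (fst g) *v snd g))"

definition Iso :: "(real^'n::finite \<Rightarrow> real^'n \<Rightarrow> real) \<Rightarrow> 'n aff set" where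
  "Iso B = {g. \<forall>x y. B (fst g *v x) (fst g *v y) = B x y}"

definition is_subgroup :: "('n::finite) aff set \<Rightarrow> 'n aff set \<Rightarrow> bool" where
  "is_subgroup H G \<longleftrightarrow> H \<subseteq> G \<and> aff_one \<in> H \<and>
     (\<forall>g\<in>H. \<forall>h\<in>H. aff_mult g h \<in> H) \<and> (\<forall>g\<in>H. aff_inv g \<in> H)"

definition centralizer :: "('n::finite) aff set \<Rightarrow> 'n aff set \<Rightarrow> 'n aff set" where
  "centralizer G H = {g\<in>G. \<forall>h\<in>H. aff_mult g h = aff_mult h g}"

definition center :: "('n::finite) aff set \<Rightarrow> 'n aff set" where
  "center H = centralizer H H"

definition orbit :: "('n::finite) aff set \<Rightarrow> real^'n \<Rightarrow> (real^'n) set" where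
  "orbit H x = (\<lambda>g. aff_apply g x) ` H"

text \<open>U_Lambda = sum of the subspaces im A over (I+A, v) in Lambda, i.e. A = L - I.\<close>
definition U_of :: "('n::finite) aff set \<Rightarrow> (real^'n) set" where
  "U_of Lam = span (\<Union>g\<in>Lam. range (\<lambda>x. (fst g - mat 1) *v x))"

end

theory Submission
  imports Defs
begin

lemma span_orth:
  fixes B :: "real^'n \<Rightarrow> real^'n \<Rightarrow> real"
  assumes "bilinear B" "\<And>a b. a \<in> S \<Longrightarrow> b \<in> T \<Longrightarrow> B a b = 0"
  shows "\<forall>u\<in>span S. \<forall>w\<in>span T. B u w = 0"
proof (intro ballI)
  fix u w assume "u \<in> span S" "w \<in> span T"
  have bz: "bilinear (\<lambda>(x::real^'n) (y::real^'n). 0::real)"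
    by (simp add: bilinear_def linear_zero)
  show "B u w = 0"
    using bilinear_eq[OF assms(1) bz, of "span S" S "span T" T u w] assms(2) \<open>u \<in> span S\<close> \<open>w \<in> span T\<close>
    by auto
qed

lemma aff_apply_mult: "aff_apply (aff_mult a b) y = aff_apply a (aff_apply b y)"
  unfolding aff_apply_def aff_mult_def
  by (simp add: matrix_vector_mul_assoc matrix_vector_right_distrib)

lemma quad_zero:
  fixes B :: "real^'n \<Rightarrow> real^'n \<Rightarrow> real"
  assumes bl: "bilinear B" and op: "open U" and xO: "x \<in> U"
    and const: "\<And>y. y \<in> U \<Longrightarrow> B (f1 y) (f2 y) = c"
    and af1: "\<And>y h. f1 (y + h) = f1 y + A1 *v h"
    and af2: "\<And>y h. f2 (y + h) = f2 y + A2 *v h"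
  shows "B (A1 *v h) (A2 *v h) = 0"
proof -
  obtain e where e: "e > 0" "ball x e \<subseteq> U" using op xO open_contains_ball by blast
  have small: "B (A1 *v k) (A2 *v k) = 0" if "norm k < e" for k
  proof -
    have "x + k \<in> U" "x + (-k) \<in> U" using that e by (auto simp: dist_norm)
    hence q1: "B (f1 x + A1 *v k) (f2 x + A2 *v k) = c"
      and q2: "B (f1 x + A1 *v (-k)) (f2 x + A2 *v (-k)) = c"
      using const af1 af2 by metis+
    have q0: "B (f1 x) (f2 x) = c" using const xO by blast
    have neg: "A1 *v (-k) = - (A1 *v k)" "A2 *v (-k) = - (A2 *v k)"
      using matrix_vector_mult_scaleR[of A1 "-1" k] matrix_vector_mult_scaleR[of A2 "-1" k] by simp_all
    from q1 q2 q0 show ?thesis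
      unfolding neg
      by (simp add: bilinear_ladd[OF bl] bilinear_radd[OF bl] bilinear_lsub[OF bl] bilinear_rsub[OF bl])
  qed
  define t where "t = e / (2 * (norm h + 1))"
  have np: "norm h + 1 > 0" "norm h + 2 > 0" "2 * norm h + 2 > 0" using norm_ge_zero[of h] by linarith+
  have tpos: "t > 0" using e unfolding t_def by (intro divide_pos_pos) (use np in auto)
  have "norm (t *\<^sub>R h) < e"
  proof -
    have "norm (t *\<^sub>R h) = t * norm h" using tpos by simp
    also have "\<dots> < t * (2 * (norm h + 1))" using tpos
      by (intro mult_strict_left_mono) (use np in auto)
    also have "\<dots> = e" unfolding t_def using np by simp
    finally show ?thesis .
  qed
  hence "B (A1 *v (t *\<^sub>R h)) (A2 *v (t *\<^sub>R h)) = 0" by (rule small)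
  hence "t * t * B (A1 *v h) (A2 *v h) = 0"
    by (simp add: matrix_vector_mult_scaleR bilinear_lmul[OF bl] bilinear_rmul[OF bl])
  thus ?thesis using tpos by simp
qed

lemma polar:
  fixes B :: "real^'n \<Rightarrow> real^'n \<Rightarrow> real"
  assumes bl: "bilinear B" and q: "\<And>h. B (A1 *v h) (A2 *v h) = 0"
  shows "B (A1 *v h) (A2 *v k) + B (A1 *v k) (A2 *v h) = 0"
proof -
  have "B (A1 *v (h + k)) (A2 *v (h + k)) = 0" by (rule q)
  thus ?thesis using q[of h] q[of k]
    by (simp add: matrix_vector_right_distrib bilinear_ladd[OF bl] bilinear_radd[OF bl])
qed

theorem lemma4p1:
  fixes B :: "real^'n \<Rightarrow> real^'n \<Rightarrow> real" and r s :: nat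
    and \<Gamma> :: "'n aff set"
  assumes "sig_form B r s"
    and "is_subgroup \<Gamma> (Iso B)"
    and "\<exists>x. open (orbit (centralizer (Iso B) \<Gamma>) x)"
  shows "\<forall>u\<in>U_of (center \<Gamma>). \<forall>w\<in>U_of \<Gamma>. B u w = 0"
proof -
  have bl: "bilinear B" and sym: "\<And>x y. B x y = B y x" using assms(1) unfolding sig_form_def by auto
  have GI: "\<Gamma> \<subseteq> Iso B" using assms(2) unfolding is_subgroup_def by auto
  define Z where "Z = centralizer (Iso B) \<Gamma>"
  obtain x where op: "open (orbit Z x)" using assms(3) Z_def by blast
  have oneZ: "aff_one \<in> Z" unfolding Z_def centralizer_def Iso_def aff_one_def aff_mult_def by simp
  have xO: "x \<in> orbit Z x" unfolding orbit_def using oneZ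
    by (auto simp: aff_apply_def aff_one_def intro!: image_eqI[of x _ aff_one])
  define disp where "disp g y = aff_apply g y - y" for g :: "'n aff" and y
  have dispaff: "disp g (y + h) = disp g y + (fst g - mat 1) *v h" for g y h
    unfolding disp_def aff_apply_def by (simp add: algebra_simps)
  have pair: "B ((fst g1 - mat 1) *v h) ((fst g2 - mat 1) *v k)
      + B ((fst g1 - mat 1) *v k) ((fst g2 - mat 1) *v h) = 0"
    if g1: "g1 \<in> \<Gamma>" and g2: "g2 \<in> \<Gamma>" for g1 g2 h k
  proof -
    have c: "B (disp g1 y) (disp g2 y) = B (disp g1 x) (disp g2 x)" if yo: "y \<in> orbit Z x" for y
    proof -
      obtain z where z: "z \<in> Z" "y = aff_apply z x" using yo unfolding orbit_def by blast
      have zI: "z \<in> Iso B" and comm: "\<And>g. g \<in> \<Gamma> \<Longrightarrow> aff_mult z g = aff_mult g z"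
        using z(1) unfolding Z_def centralizer_def by auto
      have d: "disp g y = fst z *v disp g x" if "g \<in> \<Gamma>" for g
      proof -
        have "aff_apply g y = aff_apply z (aff_apply g x)"
          using comm[OF that] z(2) aff_apply_mult by metis
        thus ?thesis unfolding disp_def z(2) aff_apply_def
          by (simp add: matrix_vector_mult_diff_distrib)
      qed
      show ?thesis using d[OF g1] d[OF g2] zI unfolding Iso_def by simp
    qed
    have "\<And>h. B ((fst g1 - mat 1) *v h) ((fst g2 - mat 1) *v h) = 0"
      by (rule quad_zero[OF bl op xO c dispaff dispaff])
    thus ?thesis by (rule polar[OF bl])
  qed
  have self: "B ((fst g - mat 1) *v h) ((fst g - mat 1) *v k) = 0" if "g \<in> \<Gamma>" for g h k
    using pair[OF that that, of h k] sym[of "(fst g - mat 1) *v h"] by simp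
  have skew: "B ((fst g - mat 1) *v h) k = - B h ((fst g - mat 1) *v k)" if "g \<in> \<Gamma>" for g h k
  proof -
    have iso: "B (fst g *v h) (fst g *v k) = B h k" using GI that unfolding Iso_def by auto
    have e: "fst g *v v = v + (fst g - mat 1) *v v" for v by (simp add: algebra_simps)
    show ?thesis using iso self[OF that, of h k] unfolding e[of h] e[of k]
      by (simp add: bilinear_ladd[OF bl] bilinear_radd[OF bl])
  qed
  have main: "B ((fst d - mat 1) *v h) ((fst g - mat 1) *v k) = 0"
    if d: "d \<in> center \<Gamma>" and g: "g \<in> \<Gamma>" for d g h k
  proof -
    have dG: "d \<in> \<Gamma>" and comm: "aff_mult d g = aff_mult g d"
      using d g unfolding center_def centralizer_def by auto
    have mc: "fst d ** fst g = fst g ** fst d" using comm unfolding aff_mult_def by simp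
    let ?D = "fst d - mat 1" and ?A = "fst g - mat 1"
    have mv: "fst d *v (fst g *v k) = fst g *v (fst d *v k)" by (simp add: matrix_vector_mul_assoc mc)
    have "B (?D *v h) (?A *v k) = - B h (?D *v (?A *v k))" by (rule skew[OF dG])
    also have "?D *v (?A *v k) = ?A *v (?D *v k)" using mv by (simp add: algebra_simps)
    also have "- B h (?A *v (?D *v k)) = B (?A *v h) (?D *v k)" using skew[OF g, of h "?D *v k"] by simp
    also have "\<dots> = B (?D *v k) (?A *v h)" by (rule sym)
    finally have "B (?D *v h) (?A *v k) = B (?D *v k) (?A *v h)" .
    with pair[OF dG g, of h k] show ?thesis by simp
  qed
  show ?thesis unfolding U_of_def
    by (rule span_orth[OF bl]) (auto intro: main)
qed

end
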